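(* Let $A\subset\mathbb R$ be an open interval of length strictly larger than $2$ and let $\psi:A\to\mathbb C$ be a regular $\mathbb C$-supershift on $A$. Then $a\in A\mapsto a\,\psi(a)$ is a regular $\mathbb C$-supershift on $A$; consequently, for every polynomial $p$ with complex coefficients, $a\in A\mapsto p(a)\,\psi(a)$ is a regular $\mathbb C$-supershift on $A$.
   Context: For an open interval $A\subset\mathbb R$ of length $R>2$ (possibly infinite), set $\mathbb A=\{(a,a')\in\mathbb R\times A:\ a'+[-1,1]\subset A,\ a+a'\in A\}$. For a sequence $\boldsymbol\epsilon=(\epsilon_N)_{N\ge1}$ with $\epsilon_N\in[0,1)$ and $\epsilon_N\to0$, put $h^{\boldsymbol\epsilon}_{N,\nu}=1-2\,\frac{\nu+\epsilon_N(N-\nu)}{N}$ for $0\le\nu\le N$. For a continuous $\psi:A\to\mathbb C$ and $(a,a')\in\mathbb A$ set $$S_N^{\boldsymbol\epsilon}[\psi](a,a')=\sum_{\nu=0}^N\binom N\nu\Big(\frac{1+a}2\Big)^{N-\nu}\Big(\frac{1-a}2\Big)^{\nu}\psi\big(a'+h^{\boldsymbol\epsilon}_{N,\nu}\big).$$ A continuous $\psi:A\to\mathbb C$ is called a regular $\mathbb C$-supershift on $A$ if (1) for every such sequence $\boldsymbol\epsilon$, $S_N^{\boldsymbol\epsilon}[\psi](a,a')\to\psi(a+a')$ as $N\to\infty$ uniformly on compact subsets of $\mathbb A$; and (2) for every family $\{\boldsymbol\epsilon_{\iota'}=(\epsilon_{\iota',N})_{N\ge1}:\iota'\in I'\}$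 of such sequences with $\sup_{\iota'\in I'}\epsilon_{\iota',N}\to0$ as $N\to\infty$, the convergence in (1) is uniform with respect to $\iota'\in I'$ on each compact subset of $\mathbb A$. *)

theory Defs
  imports "HOL-Analysis.Analysis" "HOL-Computational_Algebra.Polynomial"
begin

definition AA :: "real set \<Rightarrow> (real \<times> real) set" where
  "AA A = {(a, a'). a' \<in> A \<and> {a' - 1 .. a' + 1} \<subseteq> A \<and> a + a' \<in> A}"

definition adm_seq :: "(nat \<Rightarrow> real) \<Rightarrow> bool" where
  "adm_seq eps \<longleftrightarrow> (\<forall>N. 0 \<le> eps N \<and> eps N < 1) \<and> eps \<longlonglongrightarrow> 0"

definition hN :: "(nat \<Rightarrow> real) \<Rightarrow> nat \<Rightarrow> nat \<Rightarrow> real" where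
  "hN eps N \<nu> = 1 - 2 * ((real \<nu> + eps N * (real N - real \<nu>)) / real N)"

definition SN :: "(nat \<Rightarrow> real) \<Rightarrow> (real \<Rightarrow> complex) \<Rightarrow> nat \<Rightarrow> real \<times> real \<Rightarrow> complex" where
  "SN eps psi N p = (\<Sum>\<nu>=0..N. complex_of_real (real (N choose \<nu>)
       * ((1 + fst p) / 2) ^ (N - \<nu>) * ((1 - fst p) / 2) ^ \<nu>)
       * psi (snd p + hN eps N \<nu>))"

text \<open>Regular C-supershift on A (condition (1) and (2) of the paper;
  a family of sequences is represented as a set of sequences).\<close>
definition regular_supershift :: "real set \<Rightarrow> (real \<Rightarrow> complex) \<Rightarrow> bool" where
  "regular_supershift A psi \<longleftrightarrow>
     continuous_on A psi \<and>
     (\<forall>eps. adm_seq eps \<longrightarrow>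
        (\<forall>K. compact K \<and> K \<subseteq> AA A \<longrightarrow>
           uniform_limit K (SN eps psi) (\<lambda>p. psi (fst p + snd p)) sequentially)) \<and>
     (\<forall>F. (\<forall>eps\<in>F. adm_seq eps) \<and>
          (\<forall>e>0. \<exists>N0. \<forall>N\<ge>N0. \<forall>eps\<in>F. eps N < e) \<longrightarrow>
        (\<forall>K. compact K \<and> K \<subseteq> AA A \<longrightarrow>
           (\<forall>e>0. \<exists>N0. \<forall>N\<ge>N0. \<forall>eps\<in>F. \<forall>p\<in>K.
               norm (SN eps psi N p - psi (fst p + snd p)) < e)))"

end

theory Submission
  imports Defs
begin

definition epsS :: "(nat \<Rightarrow> real) \<Rightarrow> nat \<Rightarrow> real" where
 "epsS eps M = (if M = 0 then 0 else (1 + real M * eps (Suc M)) / real (Suc M))"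

lemma hN_shift_aux:
  fixes m x e :: real assumes "m > 0"
  shows "(x + (1 + m*e)/(m+1) * (m - x)) / m = (x + 1 + e*((m+1) - (x+1)))/(m+1)"
proof -
  have mm: "m*m > 0" using assms by simp
  have m1: "m + 1 \<noteq> 0" "m + m*m \<noteq> 0" "m \<noteq> 0" using assms mm by linarith+
  have "x + (1 + m*e)/(m+1) * (m - x) = m*(x + 1 + e*((m+1) - (x+1)))/(m+1)"
  proof -
    have "x + (1 + m*e)/(m+1) * (m - x) = (x*(m+1) + (1 + m*e)*(m - x))/(m+1)"
      using m1(1) by (simp add: divide_simps)
    also have "x*(m+1) + (1 + m*e)*(m - x) = m*(x + 1 + e*((m+1) - (x+1)))"
      by (simp add: algebra_simps)
    finally show ?thesis .
  qed
  then show ?thesis using m1(3) by simp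
qed

lemma hN_shift: "M \<noteq> 0 \<Longrightarrow> hN eps (Suc M) (Suc \<mu>) = hN (epsS eps) M \<mu>"
  using hN_shift_aux[of "real M" "real \<mu>" "eps (Suc M)"]
  by (simp add: hN_def epsS_def add.commute)

lemma SN_x:
  assumes "M \<noteq> 0"
  shows "SN eps (\<lambda>x. complex_of_real x * psi x) (Suc M) p =
     complex_of_real (snd p + 1 - 2 * eps (Suc M)) * SN eps psi (Suc M) p
     - complex_of_real ((1 - fst p) * (1 - eps (Suc M))) * SN (epsS eps) psi M p"
proof -
  define u where "u = (1 + fst p) / 2"
  define v where "v = (1 - fst p) / 2"
  define \<epsilon> where "\<epsilon> = eps (Suc M)"
  define r where "r n \<nu> = real (n choose \<nu>) * u^(n-\<nu>) * v^\<nu>" for n \<nu>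
  have SN_r: "SN e' f n p = (\<Sum>\<nu>=0..n. complex_of_real (r n \<nu>) * f (snd p + hN e' n \<nu>))" for e' f n
    by (simp add: SN_def r_def u_def v_def)
  have hsplit: "snd p + hN eps (Suc M) \<nu> = (snd p + 1 - 2*\<epsilon>) - 2*(1-\<epsilon>) * (real \<nu> / real (Suc M))" for \<nu>
    by (simp add: hN_def \<epsilon>_def field_simps)
  define g where "g \<nu> = complex_of_real (r (Suc M) \<nu> * real \<nu> / real (Suc M)) * psi (snd p + hN eps (Suc M) \<nu>)" for \<nu>
  have "SN eps (\<lambda>x. complex_of_real x * psi x) (Suc M) p
     = (\<Sum>\<nu>=0..Suc M. complex_of_real (snd p + 1 - 2*\<epsilon>) * (complex_of_real (r (Suc M) \<nu>) * psi (snd p + hN eps (Suc M) \<nu>))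
          - complex_of_real (2*(1-\<epsilon>)) * g \<nu>)"
    unfolding SN_r g_def
  proof (rule sum.cong)
    fix \<nu> assume "\<nu> \<in> {0..Suc M}"
    define P where "P = psi (snd p + hN eps (Suc M) \<nu>)"
    define R where "R = r (Suc M) \<nu>"
    define q where "q = real \<nu> / real (Suc M)"
    have "complex_of_real R * (complex_of_real (snd p + hN eps (Suc M) \<nu>) * P)
       = complex_of_real (snd p + 1 - 2*\<epsilon>) * (complex_of_real R * P)
          - complex_of_real (2*(1-\<epsilon>)) * (complex_of_real (R * q) * P)"
      unfolding hsplit q_def[symmetric] by (simp add: algebra_simps)
    then show "complex_of_real (r (Suc M) \<nu>) * (complex_of_real (snd p + hN eps (Suc M) \<nu>) * psi (snd p + hN eps (Suc M) \<nu>))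
       = complex_of_real (snd p + 1 - 2*\<epsilon>) * (complex_of_real (r (Suc M) \<nu>) * psi (snd p + hN eps (Suc M) \<nu>))
          - complex_of_real (2*(1-\<epsilon>)) * (complex_of_real (r (Suc M) \<nu> * real \<nu> / real (Suc M)) * psi (snd p + hN eps (Suc M) \<nu>))"
      by (simp add: P_def R_def q_def)
  qed simp
  also have "\<dots> = complex_of_real (snd p + 1 - 2*\<epsilon>) * SN eps psi (Suc M) p - complex_of_real (2*(1-\<epsilon>)) * (\<Sum>\<nu>=0..Suc M. g \<nu>)"
    unfolding SN_r sum_subtractf sum_distrib_left by simp
  also have "(\<Sum>\<nu>=0..Suc M. g \<nu>) = g 0 + (\<Sum>\<mu>=0..M. g (Suc \<mu>))"
    by (simp only: sum.atLeast0_atMost_Suc_shift comp_def)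
  also have "g 0 = 0" by (simp add: g_def)
  also have "(\<Sum>\<mu>=0..M. g (Suc \<mu>)) = complex_of_real v * SN (epsS eps) psi M p"
  proof -
    have "g (Suc \<mu>) = complex_of_real v * (complex_of_real (r M \<mu>) * psi (snd p + hN (epsS eps) M \<mu>))" for \<mu>
    proof -
      have b: "real (Suc M choose Suc \<mu>) * real (Suc \<mu>) = real (Suc M) * real (M choose \<mu>)"
        by (metis Suc_times_binomial of_nat_mult mult.commute)
      have "r (Suc M) (Suc \<mu>) * real (Suc \<mu>) = (real (Suc M choose Suc \<mu>) * real (Suc \<mu>)) * u^(M-\<mu>) * (v * v^\<mu>)"
        by (simp add: r_def mult_ac)
      also have "\<dots> = real (Suc M) * (v * r M \<mu>)"
        unfolding b r_def by (simp only: mult_ac)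
      finally have "r (Suc M) (Suc \<mu>) * real (Suc \<mu>) / real (Suc M) = v * r M \<mu>"
        by (simp del: of_nat_Suc)
      then show ?thesis unfolding g_def using hN_shift[OF assms] by simp
    qed
    then show ?thesis by (simp add: SN_r sum_distrib_left)
  qed
  finally have fin: "SN eps (\<lambda>x. complex_of_real x * psi x) (Suc M) p = complex_of_real (snd p + 1 - 2*\<epsilon>) * SN eps psi (Suc M) p
      - complex_of_real (2*(1-\<epsilon>)) * (0 + complex_of_real v * SN (epsS eps) psi M p)" .
  have e2: "2 * (1 - \<epsilon>) * v = (1 - fst p) * (1 - \<epsilon>)" by (simp add: v_def)
  have "complex_of_real (2*(1-\<epsilon>)) * (0 + complex_of_real v * SN (epsS eps) psi M p)
     = complex_of_real ((1 - fst p) * (1 - \<epsilon>)) * SN (epsS eps) psi M p"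
    by (simp only: add_0_left of_real_mult mult.assoc e2[symmetric])
  then show ?thesis by (subst fin, subst (asm) \<epsilon>_def, simp add: \<epsilon>_def)
qed


definition cond2 :: "real set \<Rightarrow> (real \<Rightarrow> complex) \<Rightarrow> bool" where
 "cond2 A psi \<longleftrightarrow> (\<forall>F. (\<forall>eps\<in>F. adm_seq eps) \<and> (\<forall>e>0. \<exists>N0. \<forall>N\<ge>N0. \<forall>eps\<in>F. eps N < e) \<longrightarrow>
        (\<forall>K. compact K \<and> K \<subseteq> AA A \<longrightarrow>
           (\<forall>e>0. \<exists>N0. \<forall>N\<ge>N0. \<forall>eps\<in>F. \<forall>p\<in>K. norm (SN eps psi N p - psi (fst p + snd p)) < e)))"

lemma cond2_D:
  assumes "cond2 A f" "(\<forall>eps\<in>F. adm_seq eps) \<and> (\<forall>e>0. \<exists>N0. \<forall>N\<ge>N0. \<forall>eps\<in>F. eps N < e)"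
    "compact K \<and> K \<subseteq> AA A" "(e::real) > 0"
  shows "\<exists>N0. \<forall>N\<ge>N0. \<forall>eps\<in>F. \<forall>p\<in>K. norm (SN eps f N p - f (fst p + snd p)) < e"
proof -
  have "\<forall>e>0. \<exists>N0. \<forall>N\<ge>N0. \<forall>eps\<in>F. \<forall>p\<in>K. norm (SN eps f N p - f (fst p + snd p)) < e"
    using assms(1)[unfolded cond2_def, THEN spec[of _ F], THEN mp, OF assms(2), THEN spec[of _ K], THEN mp, OF assms(3)] .
  then show ?thesis using assms(4) by blast
qed

lemma rs_imp: "regular_supershift A psi \<Longrightarrow> continuous_on A psi \<and> cond2 A psi"
  unfolding regular_supershift_def cond2_def by blast

lemma adm_small:
  assumes "adm_seq eps" shows "\<forall>e>0. \<exists>N0. \<forall>N\<ge>N0. \<forall>eps'\<in>{eps}. eps' N < e"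
proof (intro allI impI)
  fix e :: real assume "e > 0"
  from assms have "eps \<longlonglongrightarrow> 0" by (simp add: adm_seq_def)
  then obtain N0 where "\<forall>N\<ge>N0. norm (eps N - 0) < e" using \<open>e>0\<close> unfolding LIMSEQ_iff by blast
  then have "\<forall>N\<ge>N0. eps N < e" by (simp add: abs_less_iff)
  then show "\<exists>N0. \<forall>N\<ge>N0. \<forall>eps'\<in>{eps}. eps' N < e" by blast
qed

lemma rs_intro:
  assumes "continuous_on A psi" "cond2 A psi" shows "regular_supershift A psi"
proof -
  have 1: "\<forall>eps. adm_seq eps \<longrightarrow> (\<forall>K. compact K \<and> K \<subseteq> AA A \<longrightarrow>
           uniform_limit K (SN eps psi) (\<lambda>p. psi (fst p + snd p)) sequentially)"
  proof (intro allI impI)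
    fix eps K assume eps: "adm_seq eps" and K: "compact K \<and> K \<subseteq> AA A"
    have "\<forall>e>0. \<exists>N0. \<forall>N\<ge>N0. \<forall>eps'\<in>{eps}. \<forall>p\<in>K. norm (SN eps' psi N p - psi (fst p + snd p)) < e"
      using assms(2) eps K adm_small[OF eps] unfolding cond2_def by blast
    then show "uniform_limit K (SN eps psi) (\<lambda>p. psi (fst p + snd p)) sequentially"
      unfolding uniform_limit_sequentially_iff dist_norm by auto
  qed
  show ?thesis unfolding regular_supershift_def using assms(1) 1 assms(2)[unfolded cond2_def] by blast
qed

lemma SN_add: "SN eps (\<lambda>x. f x + g x) N p = SN eps f N p + SN eps g N p"
  by (simp add: SN_def distrib_left sum.distrib)

lemma SN_cmult: "SN eps (\<lambda>x. c * f x) N p = c * SN eps f N p"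
  by (simp add: SN_def sum_distrib_left mult_ac)

lemma cond2_add:
  assumes f: "cond2 A f" and g: "cond2 A g" shows "cond2 A (\<lambda>x. f x + g x)"
  unfolding cond2_def
proof (intro allI impI)
  fix F K and e :: real
  assume H: "(\<forall>eps\<in>F. adm_seq eps) \<and> (\<forall>e>0. \<exists>N0. \<forall>N\<ge>N0. \<forall>eps\<in>F. eps N < e)"
    and K: "compact K \<and> K \<subseteq> AA A" and e: "e > 0"
  have e2: "e/2 > 0" using e by simp
  obtain N1 where N1: "\<forall>N\<ge>N1. \<forall>eps\<in>F. \<forall>p\<in>K. norm (SN eps f N p - f (fst p + snd p)) < e/2"
    using cond2_D[OF f H K e2] by blast
  obtain N2 where N2: "\<forall>N\<ge>N2. \<forall>eps\<in>F. \<forall>p\<in>K. norm (SN eps g N p - g (fst p + snd p)) < e/2"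
    using cond2_D[OF g H K e2] by blast
  show "\<exists>N0. \<forall>N\<ge>N0. \<forall>eps\<in>F. \<forall>p\<in>K. norm (SN eps (\<lambda>x. f x + g x) N p - (f (fst p + snd p) + g (fst p + snd p))) < e"
  proof (intro exI allI impI ballI)
    fix N eps p assume N: "max N1 N2 \<le> N" and eps: "eps \<in> F" and p: "p \<in> K"
    have "norm (SN eps (\<lambda>x. f x + g x) N p - (f (fst p + snd p) + g (fst p + snd p)))
      = norm ((SN eps f N p - f (fst p + snd p)) + (SN eps g N p - g (fst p + snd p)))"
      by (simp add: SN_add algebra_simps)
    also have "\<dots> \<le> norm (SN eps f N p - f (fst p + snd p)) + norm (SN eps g N p - g (fst p + snd p))"
      by (rule norm_triangle_ineq)
    also have "\<dots> < e/2 + e/2" using N1 N2 N eps p by (intro add_strict_mono) auto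
    finally show "norm (SN eps (\<lambda>x. f x + g x) N p - (f (fst p + snd p) + g (fst p + snd p))) < e" by simp
  qed
qed

lemma cond2_cmult:
  assumes f: "cond2 A f" shows "cond2 A (\<lambda>x. c * f x)"
  unfolding cond2_def
proof (intro allI impI)
  fix F K and e :: real
  assume H: "(\<forall>eps\<in>F. adm_seq eps) \<and> (\<forall>e>0. \<exists>N0. \<forall>N\<ge>N0. \<forall>eps\<in>F. eps N < e)"
    and K: "compact K \<and> K \<subseteq> AA A" and e: "e > 0"
  have e2: "e/(norm c + 1) > 0" using e by (simp add: add_nonneg_pos)
  obtain N1 where N1: "\<forall>N\<ge>N1. \<forall>eps\<in>F. \<forall>p\<in>K. norm (SN eps f N p - f (fst p + snd p)) < e/(norm c + 1)"
    using cond2_D[OF f H K e2] by blast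
  show "\<exists>N0. \<forall>N\<ge>N0. \<forall>eps\<in>F. \<forall>p\<in>K. norm (SN eps (\<lambda>x. c * f x) N p - c * f (fst p + snd p)) < e"
  proof (intro exI allI impI ballI)
    fix N eps p assume N: "N1 \<le> N" and eps: "eps \<in> F" and p: "p \<in> K"
    define x where "x = norm (SN eps f N p - f (fst p + snd p))"
    have x: "x < e/(norm c + 1)" "0 \<le> x" using N1 N eps p by (auto simp: x_def)
    have "norm (SN eps (\<lambda>x. c * f x) N p - c * f (fst p + snd p)) = norm c * x"
      by (simp add: SN_cmult x_def flip: right_diff_distrib norm_mult)
    also have "\<dots> \<le> (norm c + 1) * x" using x by (simp add: mult_right_mono)
    also have "\<dots> < (norm c + 1) * (e/(norm c + 1))"
      using x by (intro mult_strict_left_mono) (auto simp: add_nonneg_pos)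
    also have "\<dots> = e"
    proof -
      have "norm c + 1 \<noteq> 0" by (smt (verit) norm_ge_zero)
      then show ?thesis by simp
    qed
    finally show "norm (SN eps (\<lambda>x. c * f x) N p - c * f (fst p + snd p)) < e" .
  qed
qed

lemma epsS_small:
  assumes nn: "\<forall>eps\<in>F. \<forall>N. 0 \<le> eps N"
    and sm: "\<forall>e>0. \<exists>N0. \<forall>N\<ge>N0. \<forall>eps\<in>F. eps N < e"
  shows "\<forall>e>0. \<exists>N0. \<forall>N\<ge>N0. \<forall>eps\<in>F. epsS eps N < e"
proof (intro allI impI)
  fix e :: real assume e: "e > 0"
  have e2: "e/2 > 0" using e by simp
  obtain N0 where N0: "\<forall>N\<ge>N0. \<forall>eps\<in>F. eps N < e/2" using sm e2 by blast
  obtain N1 where N1: "inverse (real (Suc N1)) < e/2" using reals_Archimedean[OF e2] by blast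
  show "\<exists>N0. \<forall>N\<ge>N0. \<forall>eps\<in>F. epsS eps N < e"
  proof (intro exI allI impI ballI)
    fix N eps assume N: "N0 + N1 \<le> N" and eps: "eps \<in> F"
    have a: "eps (Suc N) < e/2" using N0 N eps by auto
    have nz: "0 \<le> eps (Suc N)" using nn eps by auto
    have b: "1 / real (Suc N) < e/2"
    proof -
      have "1 / real (Suc N) \<le> inverse (real (Suc N1))" using N
        by (simp add: divide_simps)
      then show ?thesis using N1 by linarith
    qed
    have c: "epsS eps N \<le> 1 / real (Suc N) + eps (Suc N)"
    proof (cases "N = 0")
      case True then show ?thesis using nz by (simp add: epsS_def)
    next
      case False
      have "epsS eps N = 1 / real (Suc N) + (real N / real (Suc N)) * eps (Suc N)"
        using False by (simp add: epsS_def add_divide_distrib)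
      also have "\<dots> \<le> 1 / real (Suc N) + 1 * eps (Suc N)"
        using nz by (intro add_left_mono mult_right_mono) auto
      finally show ?thesis by simp
    qed
    show "epsS eps N < e" using a b c by linarith
  qed
qed

lemma small_LIMSEQ:
  assumes "\<forall>N. 0 \<le> eps N" "\<forall>e>0. \<exists>N0. \<forall>N\<ge>N0. eps N < (e::real)"
  shows "eps \<longlonglongrightarrow> 0"
  unfolding LIMSEQ_iff using assms by fastforce

lemma adm_epsS: assumes "adm_seq eps" shows "adm_seq (epsS eps)"
proof -
  have b: "\<forall>N. 0 \<le> eps N \<and> eps N < 1" using assms by (simp add: adm_seq_def)
  have r: "0 \<le> epsS eps M \<and> epsS eps M < 1" for M
  proof (cases "M = 0")
    case True then show ?thesis by (simp add: epsS_def)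
  next
    case False
    have "real M * eps (Suc M) < real M * 1" using b False by (intro mult_strict_left_mono) auto
    then show ?thesis using b False by (auto simp: epsS_def divide_simps)
  qed
  have "\<forall>e>0. \<exists>N0. \<forall>N\<ge>N0. \<forall>e'\<in>{eps}. epsS e' N < e"
    using epsS_small[of "{eps}"] adm_small[OF assms] b by auto
  then have "epsS eps \<longlonglongrightarrow> 0" using small_LIMSEQ[of "epsS eps"] r by auto
  then show ?thesis using r by (simp add: adm_seq_def)
qed


lemma div3_help: "(Y::real) \<noteq> 0 \<Longrightarrow> e / (3 * Y) * Y = e / 3"
  by (simp add: field_simps)

lemma bound_help1:
  fixes c x C d :: real
  assumes "0 \<le> x" "\<bar>c\<bar> \<le> C" "x < d" "0 < C"
  shows "\<bar>c\<bar> * x < C * d"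
proof -
  have "\<bar>c\<bar> * x \<le> C * x" using assms by (intro mult_right_mono) auto
  also have "C * x < C * d" using assms by (intro mult_strict_left_mono) auto
  finally show ?thesis .
qed

lemma bound_help2:
  fixes c x C d :: real
  assumes "0 \<le> x" "\<bar>c\<bar> < C" "x \<le> d" "0 < d"
  shows "\<bar>c\<bar> * x < C * d"
proof -
  have "\<bar>c\<bar> * x \<le> \<bar>c\<bar> * d" using assms by (intro mult_left_mono) auto
  also have "\<bar>c\<bar> * d < C * d" using assms by (intro mult_strict_right_mono) auto
  finally show ?thesis .
qed

lemma tri3: "norm (x - y - z) \<le> norm x + norm y + norm (z::complex)"
  using norm_triangle_ineq4[of "x - y" z] norm_triangle_ineq4[of x y] by linarith

lemma cond2_x:
  assumes cont: "continuous_on A psi" and c: "cond2 A psi"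
  shows "cond2 A (\<lambda>x. complex_of_real x * psi x)"
  unfolding cond2_def
proof (intro allI impI)
  fix F K and e :: real
  assume H: "(\<forall>eps\<in>F. adm_seq eps) \<and> (\<forall>e>0. \<exists>N0. \<forall>N\<ge>N0. \<forall>eps\<in>F. eps N < e)"
    and K: "compact K \<and> K \<subseteq> AA A" and e: "e > 0"
  have nn: "\<forall>eps\<in>F. \<forall>N. 0 \<le> eps N \<and> eps N < 1" using H by (auto simp: adm_seq_def)
  define F' where "F' = epsS ` F"
  have H': "(\<forall>eps\<in>F'. adm_seq eps) \<and> (\<forall>e>0. \<exists>N0. \<forall>N\<ge>N0. \<forall>eps\<in>F'. eps N < e)"
  proof
    show "\<forall>eps\<in>F'. adm_seq eps" using H adm_epsS by (auto simp: F'_def)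
    have "\<forall>e>0. \<exists>N0. \<forall>N\<ge>N0. \<forall>eps\<in>F. epsS eps N < e" using epsS_small[of F] H nn by auto
    then show "\<forall>e>0. \<exists>N0. \<forall>N\<ge>N0. \<forall>eps\<in>F'. eps N < e" by (simp add: F'_def)
  qed
  have "bounded K" using K compact_imp_bounded by auto
  then obtain B where B: "B > 0" "\<forall>p\<in>K. norm p \<le> B" unfolding bounded_pos by blast
  have Bfs: "\<bar>fst p\<bar> \<le> B \<and> \<bar>snd p\<bar> \<le> B" if "p \<in> K" for p
  proof -
    have "norm (fst p) \<le> norm p" using norm_fst_le[of "fst p" "snd p"] by simp
    moreover have "norm (snd p) \<le> norm p" using norm_snd_le[of "snd p" "fst p"] by simp
    ultimately show ?thesis using B that by auto
  qed
  define S where "S = (\<lambda>p. fst p + snd p) ` K"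
  have SA: "S \<subseteq> A" using K by (auto simp: S_def AA_def)
  have cS: "compact S" unfolding S_def using K by (intro compact_continuous_image continuous_intros) auto
  have "compact (psi ` S)" using cS by (intro compact_continuous_image continuous_on_subset[OF cont SA])
  then have "bounded (psi ` S)" by (rule compact_imp_bounded)
  then obtain Mb where Mb: "Mb > 0" "\<forall>y\<in>psi ` S. norm y \<le> Mb" unfolding bounded_pos by blast
  have Mbp: "norm (psi (fst p + snd p)) \<le> Mb" if "p \<in> K" for p using Mb(2) that by (auto simp: S_def)
  define d1 where "d1 = e / (3 * (B + 3))"
  define d3 where "d3 = e / (3 * (B + 1) * Mb)"
  have d1: "d1 > 0" using e B by (simp add: d1_def)
  have d3: "d3 > 0" using e B Mb by (simp add: d3_def)
  have d1e: "(B + 3) * d1 = e / 3"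
  proof -
    have "B + 3 \<noteq> 0" using B by simp
    then show ?thesis unfolding d1_def by (simp add: field_simps)
  qed
  have d3e: "d3 * (B + 1) * Mb = e / 3"
  proof -
    have X: "(B + 1) * Mb \<noteq> 0" using B Mb by simp
    have "d3 * (B + 1) * Mb = e / (3 * ((B + 1) * Mb)) * ((B + 1) * Mb)"
      by (simp only: d3_def mult.assoc)
    also have "\<dots> = e / 3" by (rule div3_help[OF X])
    finally show ?thesis .
  qed
  obtain N1 where N1: "\<forall>N\<ge>N1. \<forall>eps\<in>F. \<forall>p\<in>K. norm (SN eps psi N p - psi (fst p + snd p)) < d1"
    using cond2_D[OF c H K d1] by blast
  obtain N2 where N2: "\<forall>N\<ge>N2. \<forall>eps\<in>F'. \<forall>p\<in>K. norm (SN eps psi N p - psi (fst p + snd p)) < d1"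
    using cond2_D[OF c H' K d1] by blast
  obtain N3 where N3: "\<forall>N\<ge>N3. \<forall>eps\<in>F. eps N < d3"
    using H[THEN conjunct2, rule_format, OF d3] by blast
  show "\<exists>N0. \<forall>N\<ge>N0. \<forall>eps\<in>F. \<forall>p\<in>K. norm (SN eps (\<lambda>x. complex_of_real x * psi x) N p
          - complex_of_real (fst p + snd p) * psi (fst p + snd p)) < e"
  proof (intro exI allI impI ballI)
    fix N eps p assume N: "N1 + N2 + N3 + 2 \<le> N" and eps: "eps \<in> F" and p: "p \<in> K"
    define M where "M = N - 1"
    have NM: "N = Suc M" and M0: "M \<noteq> 0" and MN2: "N2 \<le> M" using N by (auto simp: M_def)
    define a where "a = fst p"
    define a' where "a' = snd p"
    define \<epsilon> where "\<epsilon> = eps N"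
    define P where "P = psi (fst p + snd p)"
    define S1 where "S1 = SN eps psi N p"
    define S2 where "S2 = SN (epsS eps) psi M p"
    have ab: "\<bar>a\<bar> \<le> B" "\<bar>a'\<bar> \<le> B" using Bfs[OF p] by (auto simp: a_def a'_def)
    have \<epsilon>b: "0 \<le> \<epsilon>" "\<epsilon> < 1" "\<epsilon> < d3" using nn eps N3 N by (auto simp: \<epsilon>_def)
    have n1: "norm (S1 - P) < d1" using N1 N eps p by (auto simp: S1_def P_def)
    have n2: "norm (S2 - P) < d1" using N2 MN2 eps p by (auto simp: S2_def P_def F'_def)
    have nP: "norm P \<le> Mb" using Mbp[OF p] by (simp add: P_def)
    have sx: "SN eps (\<lambda>x. complex_of_real x * psi x) N p
       = complex_of_real (a' + 1 - 2*\<epsilon>) * S1 - complex_of_real ((1 - a) * (1 - \<epsilon>)) * S2"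
      using SN_x[OF M0, of eps psi p] by (simp add: NM a_def a'_def \<epsilon>_def S1_def S2_def)
    have eq: "SN eps (\<lambda>x. complex_of_real x * psi x) N p - complex_of_real (fst p + snd p) * P
       = complex_of_real (a' + 1 - 2*\<epsilon>) * (S1 - P) - complex_of_real ((1 - a) * (1 - \<epsilon>)) * (S2 - P)
         - complex_of_real (\<epsilon> * (1 + a)) * P"
      unfolding sx a_def[symmetric] a'_def[symmetric] by (simp add: algebra_simps)
    have c1: "\<bar>a' + 1 - 2*\<epsilon>\<bar> \<le> B + 3" using ab \<epsilon>b by (smt (verit))
    have Bp3: "0 < B + 3" using B by simp
    have t1: "\<bar>a' + 1 - 2*\<epsilon>\<bar> * norm (S1 - P) < e / 3"
      using bound_help1[OF norm_ge_zero c1 n1 Bp3] d1e by simp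
    have c2: "\<bar>(1 - a) * (1 - \<epsilon>)\<bar> \<le> B + 3"
    proof -
      have "\<bar>(1 - a) * (1 - \<epsilon>)\<bar> = \<bar>1 - a\<bar> * \<bar>1 - \<epsilon>\<bar>" by (rule abs_mult)
      also have "\<dots> \<le> (B + 1) * 1" using ab \<epsilon>b by (intro mult_mono) auto
      finally show ?thesis by simp
    qed
    have t2: "\<bar>(1 - a) * (1 - \<epsilon>)\<bar> * norm (S2 - P) < e / 3"
      using bound_help1[OF norm_ge_zero c2 n2 Bp3] d1e by simp
    have c3: "\<bar>\<epsilon> * (1 + a)\<bar> < d3 * (B + 1)"
    proof -
      have "\<bar>\<epsilon> * (1 + a)\<bar> = \<epsilon> * \<bar>1 + a\<bar>" using \<epsilon>b by (simp add: abs_mult)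
      also have "\<dots> \<le> \<epsilon> * (B + 1)" using ab \<epsilon>b by (intro mult_left_mono) auto
      also have "\<dots> < d3 * (B + 1)" using \<epsilon>b B by (intro mult_strict_right_mono) auto
      finally show ?thesis .
    qed
    have t3: "\<bar>\<epsilon> * (1 + a)\<bar> * norm P < e / 3"
      using bound_help2[OF norm_ge_zero c3 nP Mb(1)] d3e by (simp add: mult.assoc)
    have "norm (SN eps (\<lambda>x. complex_of_real x * psi x) N p - complex_of_real (fst p + snd p) * P)
       \<le> \<bar>a' + 1 - 2*\<epsilon>\<bar> * norm (S1 - P) + \<bar>(1 - a) * (1 - \<epsilon>)\<bar> * norm (S2 - P) + \<bar>\<epsilon> * (1 + a)\<bar> * norm P"
      unfolding eq by (rule order_trans[OF tri3], simp only: norm_mult norm_of_real order_refl)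
    also have "\<dots> < e" using t1 t2 t3 by linarith
    finally show "norm (SN eps (\<lambda>x. complex_of_real x * psi x) N p
          - complex_of_real (fst p + snd p) * psi (fst p + snd p)) < e" by (simp add: P_def)
  qed
qed

lemma rs_x: assumes "regular_supershift A psi"
  shows "regular_supershift A (\<lambda>x. complex_of_real x * psi x)"
proof -
  have r: "continuous_on A psi" "cond2 A psi" using rs_imp[OF assms] by auto
  show ?thesis by (rule rs_intro) (intro continuous_intros r(1), rule cond2_x[OF r])
qed

lemma rs_add: assumes "regular_supershift A f" "regular_supershift A g"
  shows "regular_supershift A (\<lambda>x. f x + g x)"
proof -
  have r: "continuous_on A f" "cond2 A f" "continuous_on A g" "cond2 A g"
    using rs_imp[OF assms(1)] rs_imp[OF assms(2)] by auto
  show ?thesis by (rule rs_intro) (intro continuous_intros r(1,3), rule cond2_add[OF r(2,4)])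
qed

lemma rs_cmult: assumes "regular_supershift A f"
  shows "regular_supershift A (\<lambda>x. c * f x)"
proof -
  have r: "continuous_on A f" "cond2 A f" using rs_imp[OF assms] by auto
  show ?thesis by (rule rs_intro) (intro continuous_intros r(1), rule cond2_cmult[OF r(2)])
qed

theorem mainTheorem7:
  fixes A :: "real set" and psi :: "real \<Rightarrow> complex"
  assumes "\<exists>l r :: ereal. l < r \<and> r - l > 2 \<and> A = {x. l < ereal x \<and> ereal x < r}"
    and "regular_supershift A psi"
  shows "regular_supershift A (\<lambda>a. complex_of_real a * psi a) \<and>
         (\<forall>p :: complex poly. regular_supershift A (\<lambda>a. poly p (complex_of_real a) * psi a))"
proof -
  have r1: "regular_supershift A (\<lambda>a. complex_of_real a * psi a)" by (rule rs_x[OF assms(2)])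
  have "regular_supershift A (\<lambda>a. poly p (complex_of_real a) * psi a)" for p :: "complex poly"
  proof (induct p rule: pCons_induct)
    case 0
    have "regular_supershift A (\<lambda>a. 0 * psi a)" by (rule rs_cmult[OF assms(2)])
    then show ?case by simp
  next
    case (pCons c p)
    have h1: "regular_supershift A (\<lambda>a. c * psi a)" by (rule rs_cmult[OF assms(2)])
    have h2: "regular_supershift A (\<lambda>a. complex_of_real a * (poly p (complex_of_real a) * psi a))"
      by (rule rs_x[OF pCons(2)])
    have "regular_supershift A (\<lambda>a. c * psi a + complex_of_real a * (poly p (complex_of_real a) * psi a))"
      using rs_add[OF h1 h2] by simp
    moreover have "(\<lambda>a. c * psi a + complex_of_real a * (poly p (complex_of_real a) * psi a))
        = (\<lambda>a. poly (pCons c p) (complex_of_real a) * psi a)"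
      by (simp add: algebra_simps)
    ultimately show ?case by simp
  qed
  then show ?thesis using r1 by blast
qed

end
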